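(* Let $(G,k)$ be a connected quadratic Lie group whose Lie algebra $\mathcal G$ is nilpotent of step at most $3$ (i.e. $[\mathcal G,[\mathcal G,[\mathcal G,\mathcal G]]]=0$). Then there exist a linear endomorphism $f$ of $\mathcal G$ with $f([x,y])-[f(x),f(y)]\in\mathcal Z(\mathcal G)$ for all $x,y$ and an invertible linear endomorphism $d$ with $d[x,y]=[dx,fy]+[fx,dy]$ for all $x,y$, such that the left invariant semi-Riemannian metric $\langle x,y\rangle=k(dx,dy)$ on $G$ is flat (and geodesically complete).
   Context: A quadratic Lie group is a Lie group $G$ with a bi-invariant semi-Riemannian metric $k$; equivalently its Lie algebra carries a nondegenerate symmetric bilinear form $k$ with each $\mathrm{ad}_x$ $k$-skew-symmetric. $\mathcal Z(\mathcal G)$ denotes the center of $\mathcal G$. *)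

theory Defs
  imports "HOL-Analysis.Analysis"
begin

text \<open>A finite-dimensional real Lie algebra is modelled by a bracket on a Euclidean space.\<close>

definition bilin :: "('a::real_vector \<Rightarrow> 'a \<Rightarrow> 'b::real_vector) \<Rightarrow> bool" where
  "bilin B \<longleftrightarrow> (\<forall>x. linear (B x)) \<and> (\<forall>y. linear (\<lambda>x. B x y))"

definition lie_algebra :: "('a::real_vector \<Rightarrow> 'a \<Rightarrow> 'a) \<Rightarrow> bool" where
  "lie_algebra br \<longleftrightarrow> bilin br \<and> (\<forall>x. br x x = 0)
     \<and> (\<forall>x y z. br x (br y z) + br y (br z x) + br z (br x y) = 0)"

definition quadratic_lie_algebra :: "('a::real_vector \<Rightarrow> 'a \<Rightarrow> 'a) \<Rightarrow> ('a \<Rightarrow> 'a \<Rightarrow> real) \<Rightarrow> bool" where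
  "quadratic_lie_algebra br k \<longleftrightarrow> lie_algebra br \<and> bilin k \<and> (\<forall>x y. k x y = k y x)
     \<and> (\<forall>x. (\<forall>y. k x y = 0) \<longrightarrow> x = 0)
     \<and> (\<forall>x y z. k (br x y) z + k y (br x z) = 0)"

definition center :: "('a::real_vector \<Rightarrow> 'a \<Rightarrow> 'a) \<Rightarrow> 'a set" where
  "center br = {z. \<forall>x. br z x = 0}"

text \<open>Levi-Civita connection of the left-invariant metric g, via the Koszul formula
  on left-invariant vector fields.\<close>
definition LC_conn :: "('a::real_vector \<Rightarrow> 'a \<Rightarrow> 'a) \<Rightarrow> ('a \<Rightarrow> 'a \<Rightarrow> real) \<Rightarrow> 'a \<Rightarrow> 'a \<Rightarrow> 'a" where
  "LC_conn br g x y = (THE w. \<forall>z. 2 * g w z = g (br x y) z - g (br y z) x + g (br z x) y)"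

definition flat_left_inv :: "('a::real_vector \<Rightarrow> 'a \<Rightarrow> 'a) \<Rightarrow> ('a \<Rightarrow> 'a \<Rightarrow> real) \<Rightarrow> bool" where
  "flat_left_inv br g \<longleftrightarrow> (\<forall>x y z.
     LC_conn br g x (LC_conn br g y z) - LC_conn br g y (LC_conn br g x z)
       - LC_conn br g (br x y) z = 0)"

text \<open>Geodesic completeness of a left-invariant metric on a connected Lie group:
  every solution of the Euler--Arnold equation u' = - nabla_u u extends to all of R.\<close>
definition geod_complete_left_inv :: "('a::real_normed_vector \<Rightarrow> 'a \<Rightarrow> 'a) \<Rightarrow> ('a \<Rightarrow> 'a \<Rightarrow> real) \<Rightarrow> bool" where
  "geod_complete_left_inv br g \<longleftrightarrow> (\<forall>u0. \<exists>u::real \<Rightarrow> 'a. u 0 = u0 \<and>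
     (\<forall>t. (u has_vector_derivative (- LC_conn br g (u t) (u t))) (at t)))"

end

theory Submission imports Defs begin
lemma proj_exists:
  fixes S :: "'a::euclidean_space set"
  shows "\<exists>P. linear P \<and> (\<forall>x. P x \<in> span S) \<and> (\<forall>x\<in>span S. P x = x)"
proof -
  obtain T where T: "0 \<notin> T" "T \<subseteq> span S" "pairwise orthogonal T" "independent T"
    "card T = dim (span S)" "span T = span S"
    using orthogonal_basis_subspace subspace_span by blast
  define P where "P x = (\<Sum>b\<in>T. (b \<bullet> x / (b \<bullet> b)) *\<^sub>R b)" for x :: 'a
  have lin: "linear P"
    unfolding P_def
    by (rule linearI) (simp_all add: inner_add_right add_divide_distrib scaleR_add_left sum.distrib scaleR_sum_right)
  have inS: "P x \<in> span S" for x
    unfolding P_def using T(2) by (simp add: span_mul span_sum subsetD)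
  have fx: "P x = x" if "x \<in> span S" for x
  proof -
    have o: "orthogonal w (x - P x)" if "w \<in> span S" for w
      unfolding P_def using Gram_Schmidt_step[OF T(3)] T(6) that by simp
    have "x - P x \<in> span S" using that inS by (simp add: span_diff)
    then have "orthogonal (x - P x) (x - P x)" using o by blast
    then show ?thesis by (simp add: orthogonal_def)
  qed
  show ?thesis using lin inS fx by blast
qed

lemma sc_comb:
  fixes v :: "'a::real_vector"
  shows "a *\<^sub>R v + b *\<^sub>R v = (a+b) *\<^sub>R v"
    and "v + b *\<^sub>R v = (1+b) *\<^sub>R v"
    and "b *\<^sub>R v + v = (b+1) *\<^sub>R v"
    and "v + v = 2 *\<^sub>R v"
    and "a *\<^sub>R v - b *\<^sub>R v = (a-b) *\<^sub>R v"
    and "v - b *\<^sub>R v = (1-b) *\<^sub>R v"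
    and "b *\<^sub>R v - v = (b-1) *\<^sub>R v"
  by (simp_all add: algebra_simps scaleR_2)

theorem mainTheorem17:
  fixes br :: "'a::euclidean_space \<Rightarrow> 'a \<Rightarrow> 'a" and k :: "'a \<Rightarrow> 'a \<Rightarrow> real"
  assumes "quadratic_lie_algebra br k"
    and "\<forall>x y z w. br x (br y (br z w)) = 0"
  shows "\<exists>f d. linear f \<and> (\<forall>x y. f (br x y) - br (f x) (f y) \<in> center br)
           \<and> linear d \<and> bij d
           \<and> (\<forall>x y. d (br x y) = br (d x) (f y) + br (f x) (d y))
           \<and> flat_left_inv br (\<lambda>x y. k (d x) (d y))
           \<and> geod_complete_left_inv br (\<lambda>x y. k (d x) (d y))"
proof -
  note qa = assms(1)[unfolded quadratic_lie_algebra_def lie_algebra_def bilin_def]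
  have l1: "linear (br x)" for x using qa by blast
  have l2: "linear (\<lambda>x. br x y)" for y using qa by blast
  have alt: "br x x = 0" for x using qa by blast
  have jac: "br x (br y z) + br y (br z x) + br z (br x y) = 0" for x y z using qa by blast
  have kl1: "linear (k x)" for x using qa by blast
  have kl2: "linear (\<lambda>x. k x y)" for y using qa by blast
  have ksym: "k x y = k y x" for x y using qa by blast
  have knd: "(\<forall>y. k x y = 0) \<Longrightarrow> x = 0" for x using qa by blast
  have kinv: "k (br x y) z + k y (br x z) = 0" for x y z using qa by blast
  have nil: "br x (br y (br z w)) = 0" for x y z w using assms(2) by blast
  have Ba1: "br (x + y) z = br x z + br y z" for x y z using linear_add[OF l2] .
  have Ba2: "br z (x + y) = br z x + br z y" for x y z using linear_add[OF l1] .
  have Bs1: "br (c *\<^sub>R x) z = c *\<^sub>R br x z" for c x z using linear_cmul[OF l2] .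
  have Bs2: "br z (c *\<^sub>R x) = c *\<^sub>R br z x" for c x z using linear_cmul[OF l1] .
  have Bd1: "br (x - y) z = br x z - br y z" for x y z using linear_diff[OF l2] .
  have Bd2: "br z (x - y) = br z x - br z y" for x y z using linear_diff[OF l1] .
  have Bn1: "br (- x) z = - br x z" for x z using linear_neg[OF l2] .
  have Bn2: "br z (- x) = - br z x" for x z using linear_neg[OF l1] .
  have B01: "br 0 z = 0" for z using linear_0[OF l2] .
  have B02: "br z 0 = 0" for z using linear_0[OF l1] .
  note Bsimps = Ba1 Ba2 Bs1 Bs2 Bd1 Bd2 Bn1 Bn2 B01 B02
  have skew: "br x y = - br y x" for x y
  proof -
    have "br (x+y) (x+y) = br x x + br y x + (br x y + br y y)" by (simp only: Ba1 Ba2)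
    then have "br x y + br y x = 0" by (simp add: alt add.commute)
    then show ?thesis by (simp add: eq_neg_iff_add_eq_0)
  qed
  have ka1: "k (x + y) z = k x z + k y z" for x y z using linear_add[OF kl2] .
  have ks1: "k (c *\<^sub>R x) z = c * k x z" for c x z using linear_cmul[OF kl2] by simp
  have kd1: "k (x - y) z = k x z - k y z" for x y z using linear_diff[OF kl2] .
  have kn1: "k (- x) z = - k x z" for x z using linear_neg[OF kl2] .
  have Tswap: "k (br a b) c = - k (br b a) c" for a b c
    by (subst skew) (simp add: kn1)
  have Tcyc: "k (br a b) c = k (br c a) b" for a b c
  proof -
    have "k (br a b) c = - k b (br a c)" using kinv[of a b c] by simp
    also have "\<dots> = - k (br a c) b" by (simp add: ksym)
    also have "\<dots> = k (br c a) b" using Tswap[of a c b] by simp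
    finally show ?thesis .
  qed
  define W where "W = span {br x y | x y. True}"
  have brW: "br x y \<in> W" for x y unfolding W_def by (rule span_base) blast
  have cenW: "br z (br x w) = 0" if "w \<in> W" for z x w
  proof -
    have "linear (\<lambda>w. br z (br x w))" using l1 by (simp add: linear_compose[unfolded o_def])
    then show ?thesis
      by (rule linear_eq_0_on_span[OF _ _ that[unfolded W_def]]) (auto simp: nil)
  qed
  have cen2: "br x w \<in> center br" if "w \<in> W" for x w
  proof -
    have "br (br x w) y = 0" for y using skew[of "br x w" y] cenW[OF that, of y x] by simp
    then show ?thesis unfolding center_def by blast
  qed
  have ab0: "br (br a b) (br c e) = 0" for a b c e
  proof -
    have "br a (br b (br c e)) + br b (br (br c e) a) + br (br c e) (br a b) = 0" by (rule jac)
    moreover have "br b (br (br c e) a) = 0" using nil[of b a c e] skew[of "br c e" a] by (simp add: Bn2)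
    ultimately have "br (br c e) (br a b) = 0" by (simp add: nil)
    then show ?thesis using skew[of "br a b" "br c e"] by simp
  qed
  have abel: "br w1 w2 = 0" if "w1 \<in> W" "w2 \<in> W" for w1 w2
  proof -
    have A: "br w1 (br c e) = 0" for c e
      by (rule linear_eq_0_on_span[OF l2 _ that(1)[unfolded W_def]]) (auto simp: ab0)
    show ?thesis
      by (rule linear_eq_0_on_span[OF l1 _ that(2)[unfolded W_def]]) (auto simp: A)
  qed
  obtain P where P: "linear P" "\<And>x. P x \<in> W" "\<And>x. x \<in> W \<Longrightarrow> P x = x"
    using proj_exists[of "{br x y | x y. True}"] unfolding W_def by blast
  have Pa: "P (x + y) = P x + P y" for x y using linear_add[OF P(1)] .
  have Ps: "P (c *\<^sub>R x) = c *\<^sub>R P x" for c x using linear_cmul[OF P(1)] .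
  have Pd: "P (x - y) = P x - P y" for x y using linear_diff[OF P(1)] .
  have Pn: "P (- x) = - P x" for x using linear_neg[OF P(1)] .
  have PP: "P (P x) = P x" for x using P by blast
  have PB: "P (br x y) = br x y" for x y using P(3)[OF brW] .
  define d where "d x = x + (1/3) *\<^sub>R P x" for x
  define f where "f x = (2/3) *\<^sub>R x - (2/9) *\<^sub>R P x" for x
  define di where "di x = x - (1/4) *\<^sub>R P x" for x
  have lind: "linear d" unfolding d_def by (rule linearI) (simp_all add: Pa Ps algebra_simps)
  have linf: "linear f" unfolding f_def by (rule linearI) (simp_all add: Pa Ps algebra_simps)
  have lindi: "linear di" unfolding di_def by (rule linearI) (simp_all add: Pa Ps algebra_simps)
  have ddi: "d (di x) = x" for x unfolding d_def di_def
    by (simp add: Pd Ps PP algebra_simps) (simp add: scaleR_add_left[symmetric])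
  have did: "di (d x) = x" for x unfolding d_def di_def
    by (simp add: Pa Ps PP algebra_simps) (simp add: scaleR_add_left[symmetric] scaleR_diff_left[symmetric])
  have bijd: "bij d" by (metis bij_betw_byWitness UNIV_I ddi did subsetI)
  have PPxy: "br (P x) (P y) = 0" for x y using abel P(2) by blast
  have dder: "d (br x y) = br (d x) (f y) + br (f x) (d y)" for x y
    unfolding d_def f_def
    by (simp add: Bsimps PB PPxy algebra_simps) (simp add: sc_comb)
  have fhom: "f (br x y) - br (f x) (f y) \<in> center br" for x y
  proof -
    have e: "f (br x y) - br (f x) (f y) = (4/27) *\<^sub>R (br x (P y) - br y (P x))"
      unfolding f_def using skew[of "P x" y]
      by (simp add: Bsimps PB PPxy algebra_simps) (simp add: sc_comb)
    have cz1: "br (br a (P b)) z = 0" for a b z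
      using skew[of "br a (P b)" z] cenW[OF P(2), of z a b] by simp
    show ?thesis unfolding e center_def by (simp add: Bs1 Bd1 cz1)
  qed
  define g where "g x y = k (d x) (d y)" for x y
  have KZ: "\<forall>z. 2 * g (di (br (f x) (d y))) z = g (br x y) z - g (br y z) x + g (br z x) y" for x y
  proof
    fix z
    have c1: "k (br (d y) (f z)) (d x) = k (br (d x) (d y)) (f z)" by (rule Tcyc)
    have c2: "k (br (f y) (d z)) (d x) = k (br (d x) (f y)) (d z)" by (rule Tcyc)
    have c3: "k (br (d z) (f x)) (d y) = k (br (f x) (d y)) (d z)" using Tcyc[of "f x" "d y" "d z"] Tcyc[of "d z" "f x" "d y"] by simp
    have c4: "k (br (f z) (d x)) (d y) = k (br (d x) (d y)) (f z)" using Tcyc[of "d x" "d y" "f z"] by simp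
    show "2 * g (di (br (f x) (d y))) z = g (br x y) z - g (br y z) x + g (br z x) y"
      unfolding g_def ddi dder by (simp add: ka1 c1 c2 c3 c4)
  qed
  have LC: "LC_conn br g x y = di (br (f x) (d y))" for x y
    unfolding LC_conn_def
  proof (rule the_equality)
    show "\<forall>z. 2 * g (di (br (f x) (d y))) z = g (br x y) z - g (br y z) x + g (br z x) y"
      by (rule KZ)
  next
    fix w assume H: "\<forall>z. 2 * g w z = g (br x y) z - g (br y z) x + g (br z x) y"
    have "k (d w - br (f x) (d y)) v = 0" for v
    proof -
      have "2 * g w (di v) = 2 * g (di (br (f x) (d y))) (di v)" using H KZ[of x y] by simp
      then have "g w (di v) = g (di (br (f x) (d y))) (di v)" by simp
      then show ?thesis unfolding g_def ddi by (simp add: kd1)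
    qed
    then have "d w - br (f x) (d y) = 0" using knd by blast
    then have "d w = br (f x) (d y)" by simp
    then show "w = di (br (f x) (d y))" using did by metis
  qed
  have flat: "flat_left_inv br g"
    unfolding flat_left_inv_def
  proof (intro allI)
    fix x y z
    have j: "br (f x) (br (f y) (d z)) - br (f y) (br (f x) (d z)) = br (br (f x) (f y)) (d z)"
      using jac[of "f x" "f y" "d z"] skew[of "d z" "f x"] skew[of "d z" "br (f x) (f y)"]
      by (simp add: Bn2 algebra_simps)
    have cz: "br (f (br x y) - br (f x) (f y)) (d z) = 0" using fhom unfolding center_def by blast
    have "br (f x) (br (f y) (d z)) - br (f y) (br (f x) (d z)) - br (f (br x y)) (d z) = 0"
      using j cz by (simp add: Bd1)
    then have "di (br (f x) (br (f y) (d z)) - br (f y) (br (f x) (d z)) - br (f (br x y)) (d z)) = 0"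
      using linear_0[OF lindi] by simp
    then show "LC_conn br g x (LC_conn br g y z) - LC_conn br g y (LC_conn br g x z) - LC_conn br g (br x y) z = 0"
      unfolding LC ddi by (simp add: linear_diff[OF lindi])
  qed
  have geod: "geod_complete_left_inv br g"
    unfolding geod_complete_left_inv_def
  proof
    fix u0
    define q where "q = br u0 (P u0)"
    have qc: "q \<in> center br" unfolding q_def by (rule cen2[OF P(2)])
    have qP: "P q = q" unfolding q_def by (rule PB)
    have qz1: "br q x = 0" for x using qc unfolding center_def by blast
    have qz: "br q x = 0" "br x q = 0" for x using qz1[of x] skew[of x q] by auto
    define c where "c = (- 1/3) *\<^sub>R q"
    have m: "br (f u0) (d u0) = (4/9) *\<^sub>R q"
      unfolding f_def d_def q_def using skew[of "P u0" u0]
      by (simp add: Bsimps alt algebra_simps) (simp add: sc_comb)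
    have fl: "f (u0 + t *\<^sub>R c) = f u0 + (t * (-4/27)) *\<^sub>R q" for t
      unfolding f_def c_def by (simp add: Pa Pd Pn Ps qP algebra_simps) (simp add: sc_comb)
    have dl: "d (u0 + t *\<^sub>R c) = d u0 + (t * (-4/9)) *\<^sub>R q" for t
      unfolding d_def c_def by (simp add: Pa Pd Pn Ps qP algebra_simps) (simp add: sc_comb)
    have key: "LC_conn br g (u0 + t *\<^sub>R c) (u0 + t *\<^sub>R c) = - c" for t
    proof -
      have "br (f (u0 + t *\<^sub>R c)) (d (u0 + t *\<^sub>R c)) = (4/9) *\<^sub>R q"
        unfolding fl dl by (simp add: Ba1 Ba2 Bs1 Bs2 Bd1 Bd2 qz m)
      then show ?thesis unfolding LC di_def c_def
        by (simp add: Ps qP algebra_simps) (simp add: sc_comb)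
    qed
    show "\<exists>u. u 0 = u0 \<and> (\<forall>t. (u has_vector_derivative - LC_conn br g (u t) (u t)) (at t))"
    proof (intro exI conjI allI)
      show "(\<lambda>t. u0 + t *\<^sub>R c) 0 = u0" by simp
      fix t
      show "((\<lambda>t. u0 + t *\<^sub>R c) has_vector_derivative - LC_conn br g (u0 + t *\<^sub>R c) (u0 + t *\<^sub>R c)) (at t)"
        unfolding key by (auto intro!: derivative_eq_intros)
    qed
  qed
  show ?thesis
    apply (rule exI[of _ f], rule exI[of _ d])
    using linf fhom lind bijd dder flat geod unfolding g_def by blast
qed

end
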